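(* Let $d\ge 2$, $n,R\ge1$, and let ${\bf A}=\sum_{\nu=1}^R \xi_\nu\, {\bf u}^{(1)}_\nu\otimes\cdots\otimes{\bf u}^{(d)}_\nu\in\mathbb{R}^{n\times\cdots\times n}$ with $\xi_\nu\in\mathbb{R}$ and normalized skeleton vectors $\|{\bf u}^{(\ell)}_\nu\|=1$. For $\ell=1,\dots,d$ let $U^{(\ell)}=[{\bf u}^{(\ell)}_1,\dots,{\bf u}^{(\ell)}_R]\in\mathbb{R}^{n\times R}$ have singular values $\sigma_{\ell,1}\ge\sigma_{\ell,2}\ge\cdots\ge\sigma_{\ell,\min(n,R)}$, let $r_\ell\le\min(n,R)$, and let $W^{(\ell)}=Z^{(\ell)}_0D_{\ell,0}{V^{(\ell)}_0}^T$ be the rank-$r_\ell$ truncated SVD of $U^{(\ell)}$. Let ${\bf A}^0_{({\bf r})}=\boldsymbol{\xi}\times_1W^{(1)}\times_2\cdots\times_dW^{(d)}$ be the RHOSVD approximation, where $\boldsymbol{\xi}$ is the diagonal tensor with diagonal entries $\xi_1,\dots,\xi_R$. Norms are Frobenius (Euclidean) norms. (A) If one of the matrices $U^{(\ell)}$, say $U^{(1)}$, is orthogonal (its columns are mutually orthogonal), then $$\|{\bf A}-{\bf A}^0_{({\bf r})}\|\le C\,\|{\bf A}\|\sum_{\ell=1}^d\Big(\sum_{k=r_\ell+1}^{\min(n,R)}\sigma_{\ell,k}^2\Big)^{1/2}$$ with $C=1$. (B) If the decomposition is monotone, i.e., all coefficients $\xi_\nu$ and all entries of all skeleton vectors ${\bf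 u}^{(\ell)}_\nu$ are non-negative, then the same inequality holds with a constant $C$ that does not depend on ${\bf A}$.
   Context: For a tensor ${\bf T}$ and matrix $M$, ${\bf T}\times_\ell M$ denotes the $\ell$-mode product (multiplying every mode-$\ell$ fiber of ${\bf T}$ by $M$). The rank-$r_\ell$ truncated SVD of $U^{(\ell)}$ is $Z^{(\ell)}_0D_{\ell,0}{V^{(\ell)}_0}^T$, with $Z^{(\ell)}_0\in\mathbb{R}^{n\times r_\ell}$, $V^{(\ell)}_0\in\mathbb{R}^{R\times r_\ell}$ the leading left and right singular vectors and $D_{\ell,0}=\mathrm{diag}(\sigma_{\ell,1},\dots,\sigma_{\ell,r_\ell})$. *)

theory Defs
  imports Complex_Main "HOL-Library.FuncSet"
begin

text \<open>Conventions (0-based indices): a mode index l < d, a rank index nu < R,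
  a spatial index i < n. The skeleton vectors are u l nu :: nat => real
  (entries i < n).\<close>

definition multi_idx :: "nat \<Rightarrow> nat \<Rightarrow> (nat \<Rightarrow> nat) set" where
  "multi_idx d n = PiE {..<d} (\<lambda>_. {..<n})"

definition tnorm :: "nat \<Rightarrow> nat \<Rightarrow> ((nat \<Rightarrow> nat) \<Rightarrow> real) \<Rightarrow> real" where
  "tnorm d n T = sqrt (\<Sum>idx\<in>multi_idx d n. (T idx)^2)"

definition cp_tensor :: "nat \<Rightarrow> nat \<Rightarrow> (nat \<Rightarrow> real) \<Rightarrow> (nat \<Rightarrow> nat \<Rightarrow> nat \<Rightarrow> real)
    \<Rightarrow> (nat \<Rightarrow> nat) \<Rightarrow> real" where
  "cp_tensor d R xi u idx = (\<Sum>nu<R. xi nu * (\<Prod>l<d. u l nu (idx l)))"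

definition skel_mat :: "(nat \<Rightarrow> nat \<Rightarrow> nat \<Rightarrow> real) \<Rightarrow> nat \<Rightarrow> nat \<Rightarrow> nat \<Rightarrow> real" where
  "skel_mat u l i nu = u l nu i"

definition unit_skeleton :: "nat \<Rightarrow> nat \<Rightarrow> nat \<Rightarrow> (nat \<Rightarrow> nat \<Rightarrow> nat \<Rightarrow> real) \<Rightarrow> bool" where
  "unit_skeleton d n R u \<longleftrightarrow> (\<forall>l<d. \<forall>nu<R. sqrt (\<Sum>i<n. (u l nu i)^2) = 1)"

text \<open>Thin SVD of an n x R matrix U: U = Z diag(s) V^T with Z (n x m) and V (R x m)
  having orthonormal columns, m = min n R, and s nonnegative nonincreasing
  (the singular values sigma_1 >= ... >= sigma_m, here s 0 >= ... >= s (m-1)).\<close>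
definition is_thin_svd :: "nat \<Rightarrow> nat \<Rightarrow> (nat \<Rightarrow> nat \<Rightarrow> real) \<Rightarrow> (nat \<Rightarrow> nat \<Rightarrow> real)
    \<Rightarrow> (nat \<Rightarrow> real) \<Rightarrow> (nat \<Rightarrow> nat \<Rightarrow> real) \<Rightarrow> bool" where
  "is_thin_svd n R U Z s V \<longleftrightarrow>
     (\<forall>k<min n R. \<forall>k'<min n R. (\<Sum>i<n. Z i k * Z i k') = (if k = k' then 1 else 0)) \<and>
     (\<forall>k<min n R. \<forall>k'<min n R. (\<Sum>j<R. V j k * V j k') = (if k = k' then 1 else 0)) \<and>
     (\<forall>k<min n R. 0 \<le> s k) \<and>
     (\<forall>k. Suc k < min n R \<longrightarrow> s (Suc k) \<le> s k) \<and>
     (\<forall>i<n. \<forall>j<R. U i j = (\<Sum>k<min n R. Z i k * s k * V j k))"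

definition trunc_svd :: "nat \<Rightarrow> (nat \<Rightarrow> nat \<Rightarrow> real) \<Rightarrow> (nat \<Rightarrow> real) \<Rightarrow> (nat \<Rightarrow> nat \<Rightarrow> real)
    \<Rightarrow> nat \<Rightarrow> nat \<Rightarrow> real" where
  "trunc_svd r Z s V i j = (\<Sum>k<r. Z i k * s k * V j k)"

text \<open>RHOSVD approximation xi x_1 W^(1) x_2 ... x_d W^(d), xi the diagonal core tensor:
  entry at idx = sum_nu xi_nu prod_l W^(l)(idx l, nu).\<close>
definition rhosvd :: "nat \<Rightarrow> nat \<Rightarrow> (nat \<Rightarrow> real) \<Rightarrow> (nat \<Rightarrow> nat \<Rightarrow> nat \<Rightarrow> real)
    \<Rightarrow> (nat \<Rightarrow> nat) \<Rightarrow> real" where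
  "rhosvd d R xi W idx = (\<Sum>nu<R. xi nu * (\<Prod>l<d. W l (idx l) nu))"

definition svd_tail :: "nat \<Rightarrow> nat \<Rightarrow> nat \<Rightarrow> (nat \<Rightarrow> nat) \<Rightarrow> (nat \<Rightarrow> nat \<Rightarrow> real) \<Rightarrow> real" where
  "svd_tail d n R r s = (\<Sum>l<d. sqrt (\<Sum>k\<in>{r l..<min n R}. (s l k)^2))"

end

theory Submission
  imports Defs "HOL-Analysis.L2_Norm"
begin

lemma tnorm_L2: "tnorm d n T = L2_set T (multi_idx d n)"
  by (simp add: tnorm_def L2_set_def)

lemma finite_multi_idx[simp]: "finite (multi_idx d n)"
  by (simp add: multi_idx_def finite_PiE)

lemma sqrt_prod: "sqrt (\<Prod>x\<in>A. f x) = (\<Prod>x\<in>A. sqrt (f x))"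
  by (induction A rule: infinite_finite_induct) (auto simp: real_sqrt_mult)

lemma outer_norm:
  "L2_set (\<lambda>idx. \<Prod>l<d. f l (idx l)) (multi_idx d n) = (\<Prod>l<d. L2_set (f l) {..<n})"
proof -
  have "(\<Sum>idx\<in>multi_idx d n. (\<Prod>l<d. f l (idx l))^2) = (\<Sum>idx\<in>multi_idx d n. \<Prod>l<d. (f l (idx l))^2)"
    by (simp add: prod_power_distrib)
  also have "\<dots> = (\<Prod>l<d. \<Sum>i<n. (f l i)^2)"
    unfolding multi_idx_def by (rule prod_sum_PiE[symmetric]) auto
  finally show ?thesis unfolding L2_set_def by (simp add: sqrt_prod)
qed

lemma L2_sum_le:
  assumes "finite I"
  shows "L2_set (\<lambda>x. \<Sum>i\<in>I. g i x) A \<le> (\<Sum>i\<in>I. L2_set (g i) A)"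
  using assms
proof (induction I rule: finite_induct)
  case empty then show ?case by (simp add: L2_set_def)
next
  case (insert a F)
  have "L2_set (\<lambda>x. \<Sum>i\<in>insert a F. g i x) A = L2_set (\<lambda>x. g a x + (\<Sum>i\<in>F. g i x)) A"
    using insert by simp
  also have "\<dots> \<le> L2_set (g a) A + L2_set (\<lambda>x. \<Sum>i\<in>F. g i x) A"
    by (rule L2_set_triangle_ineq)
  also have "\<dots> \<le> L2_set (g a) A + (\<Sum>i\<in>F. L2_set (g i) A)" using insert by simp
  finally show ?case using insert by simp
qed

lemma L2_scale: "L2_set (\<lambda>x. c * g x) A = \<bar>c\<bar> * L2_set g A"
  unfolding L2_set_def
  by (simp add: power_mult_distrib real_sqrt_mult sum_nonneg flip: sum_distrib_left)

definition tele :: "(nat \<Rightarrow> real) \<Rightarrow> (nat \<Rightarrow> real) \<Rightarrow> nat \<Rightarrow> nat \<Rightarrow> real" where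
  "tele a b k l = (if l < k then b l else if l = k then a l - b l else a l)"

lemma telescope:
  "(\<Prod>l<d. a l) - (\<Prod>l<d. b l) = (\<Sum>k<d. \<Prod>l<d. tele a b k l)"
proof (induction d)
  case 0 then show ?case by simp
next
  case (Suc d)
  have e1: "(\<Prod>l<Suc d. tele a b k l) = (\<Prod>l<d. tele a b k l) * a d" if "k < d" for k
    using that by (simp add: tele_def)
  have e2: "(\<Prod>l<d. tele a b d l) = (\<Prod>l<d. b l)"
    by (rule prod.cong) (auto simp: tele_def)
  have "(\<Sum>k<Suc d. \<Prod>l<Suc d. tele a b k l)
      = (\<Sum>k<d. (\<Prod>l<d. tele a b k l) * a d) + (\<Prod>l<d. b l) * (a d - b d)"
    using e1 e2 by (simp add: tele_def)
  also have "\<dots> = ((\<Prod>l<d. a l) - (\<Prod>l<d. b l)) * a d + (\<Prod>l<d. b l) * (a d - b d)"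
    using Suc by (simp add: sum_distrib_right)
  also have "\<dots> = (\<Prod>l<Suc d. a l) - (\<Prod>l<Suc d. b l)"
    by (simp add: algebra_simps)
  finally show ?case by simp
qed

lemma prod_le_one_factor:
  fixes x :: "nat \<Rightarrow> real"
  assumes "k < d" "\<And>l. l < d \<Longrightarrow> 0 \<le> x l" "\<And>l. l < d \<Longrightarrow> l \<noteq> k \<Longrightarrow> x l \<le> 1"
  shows "(\<Prod>l<d. x l) \<le> x k"
proof -
  have "(\<Prod>l<d. x l) = x k * (\<Prod>l\<in>{..<d}-{k}. x l)"
    using assms(1) by (simp add: prod.remove)
  also have "\<dots> \<le> x k * 1"
    using assms by (intro mult_left_mono prod_le_1) auto
  finally show ?thesis by simp
qed

lemma error_bound:
  fixes U W :: "nat \<Rightarrow> nat \<Rightarrow> nat \<Rightarrow> real"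
  assumes U1: "\<And>l nu. l < d \<Longrightarrow> nu < R \<Longrightarrow> L2_set (U l nu) {..<n} \<le> 1"
    and W1: "\<And>l nu. l < d \<Longrightarrow> nu < R \<Longrightarrow> L2_set (W l nu) {..<n} \<le> 1"
  shows "L2_set (\<lambda>idx. (\<Sum>nu<R. xi nu * (\<Prod>l<d. U l nu (idx l))) - (\<Sum>nu<R. xi nu * (\<Prod>l<d. W l nu (idx l)))) (multi_idx d n)
     \<le> (\<Sum>nu<R. \<bar>xi nu\<bar> * (\<Sum>k<d. L2_set (\<lambda>i. U k nu i - W k nu i) {..<n}))"
proof -
  have eq: "(\<Sum>nu<R. xi nu * (\<Prod>l<d. U l nu (idx l))) - (\<Sum>nu<R. xi nu * (\<Prod>l<d. W l nu (idx l)))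
     = (\<Sum>nu<R. xi nu * (\<Sum>k<d. \<Prod>l<d. tele (\<lambda>l. U l nu (idx l)) (\<lambda>l. W l nu (idx l)) k l))" for idx
    by (simp add: telescope flip: sum_subtractf right_diff_distrib)
  have tele_eq: "tele (\<lambda>l. U l nu (idx l)) (\<lambda>l. W l nu (idx l)) k l
      = (if l < k then W l nu else if l = k then (\<lambda>i. U l nu i - W l nu i) else U l nu) (idx l)" for nu idx k l
    by (simp add: tele_def)
  have "L2_set (\<lambda>idx. (\<Sum>nu<R. xi nu * (\<Prod>l<d. U l nu (idx l))) - (\<Sum>nu<R. xi nu * (\<Prod>l<d. W l nu (idx l)))) (multi_idx d n)
    = L2_set (\<lambda>idx. \<Sum>nu<R. xi nu * (\<Sum>k<d. \<Prod>l<d. tele (\<lambda>l. U l nu (idx l)) (\<lambda>l. W l nu (idx l)) k l)) (multi_idx d n)"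
    by (simp only: eq)
  also have "\<dots> \<le> (\<Sum>nu<R. L2_set (\<lambda>idx. xi nu * (\<Sum>k<d. \<Prod>l<d. tele (\<lambda>l. U l nu (idx l)) (\<lambda>l. W l nu (idx l)) k l)) (multi_idx d n))"
    by (rule L2_sum_le) simp
  also have "\<dots> \<le> (\<Sum>nu<R. \<bar>xi nu\<bar> * (\<Sum>k<d. L2_set (\<lambda>i. U k nu i - W k nu i) {..<n}))"
  proof (rule sum_mono)
    fix nu assume nu: "nu \<in> {..<R}"
    have "L2_set (\<lambda>idx. xi nu * (\<Sum>k<d. \<Prod>l<d. tele (\<lambda>l. U l nu (idx l)) (\<lambda>l. W l nu (idx l)) k l)) (multi_idx d n)
      = \<bar>xi nu\<bar> * L2_set (\<lambda>idx. \<Sum>k<d. \<Prod>l<d. tele (\<lambda>l. U l nu (idx l)) (\<lambda>l. W l nu (idx l)) k l) (multi_idx d n)"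
      by (rule L2_scale)
    also have "\<dots> \<le> \<bar>xi nu\<bar> * (\<Sum>k<d. L2_set (\<lambda>idx. \<Prod>l<d. tele (\<lambda>l. U l nu (idx l)) (\<lambda>l. W l nu (idx l)) k l) (multi_idx d n))"
      by (intro mult_left_mono L2_sum_le) auto
    also have "\<dots> \<le> \<bar>xi nu\<bar> * (\<Sum>k<d. L2_set (\<lambda>i. U k nu i - W k nu i) {..<n})"
    proof (intro mult_left_mono sum_mono)
      fix k assume k: "k \<in> {..<d}"
      have "L2_set (\<lambda>idx. \<Prod>l<d. tele (\<lambda>l. U l nu (idx l)) (\<lambda>l. W l nu (idx l)) k l) (multi_idx d n)
        = (\<Prod>l<d. L2_set (if l < k then W l nu else if l = k then (\<lambda>i. U l nu i - W l nu i) else U l nu) {..<n})"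
        unfolding tele_eq by (rule outer_norm)
      also have "\<dots> \<le> L2_set (if k < k then W k nu else if k = k then (\<lambda>i. U k nu i - W k nu i) else U k nu) {..<n}"
        by (rule prod_le_one_factor) (use k nu U1 W1 in auto)
      finally show "L2_set (\<lambda>idx. \<Prod>l<d. tele (\<lambda>l. U l nu (idx l)) (\<lambda>l. W l nu (idx l)) k l) (multi_idx d n)
         \<le> L2_set (\<lambda>i. U k nu i - W k nu i) {..<n}" by simp
    qed simp
    finally show "L2_set (\<lambda>idx. xi nu * (\<Sum>k<d. \<Prod>l<d. tele (\<lambda>l. U l nu (idx l)) (\<lambda>l. W l nu (idx l)) k l)) (multi_idx d n)
       \<le> \<bar>xi nu\<bar> * (\<Sum>k<d. L2_set (\<lambda>i. U k nu i - W k nu i) {..<n})" .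
  qed
  finally show ?thesis .
qed

lemma orth_sum:
  fixes Z :: "nat \<Rightarrow> nat \<Rightarrow> real"
  assumes orth: "\<forall>k<m. \<forall>k'<m. (\<Sum>i<n. Z i k * Z i k') = (if k = k' then 1 else 0)"
    and K: "K \<subseteq> {..<m}"
  shows "(\<Sum>i<n. (\<Sum>k\<in>K. c k * Z i k)^2) = (\<Sum>k\<in>K. (c k)^2)"
proof -
  have fK: "finite K" using K finite_subset by blast
  have "(\<Sum>i<n. (\<Sum>k\<in>K. c k * Z i k)^2) = (\<Sum>i<n. \<Sum>k\<in>K. \<Sum>k'\<in>K. c k * c k' * (Z i k * Z i k'))"
    by (simp add: power2_eq_square sum_product algebra_simps)
  also have "\<dots> = (\<Sum>k\<in>K. \<Sum>k'\<in>K. c k * c k' * (\<Sum>i<n. Z i k * Z i k'))"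
    by (simp add: sum.swap[of _ "{..<n}"] sum_distrib_left)
  also have "\<dots> = (\<Sum>k\<in>K. \<Sum>k'\<in>K. c k * c k' * (if k = k' then 1 else 0))"
    using K orth by (intro sum.cong refl) (auto simp: subset_iff)
  also have "\<dots> = (\<Sum>k\<in>K. (c k)^2)"
    using fK by (simp add: power2_eq_square if_distrib cong: if_cong)
  finally show ?thesis .
qed

lemma svd_facts:
  assumes svd: "is_thin_svd n R U Z s V" and r: "r \<le> min n R" and j: "j < R"
  shows "(\<Sum>i<n. (trunc_svd r Z s V i j)^2) \<le> (\<Sum>i<n. (U i j)^2)"
    and "(\<Sum>i<n. (U i j - trunc_svd r Z s V i j)^2) = (\<Sum>k\<in>{r..<min n R}. (s k * V j k)^2)"
proof -
  let ?m = "min n R"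
  have orth: "\<forall>k<?m. \<forall>k'<?m. (\<Sum>i<n. Z i k * Z i k') = (if k = k' then 1 else 0)"
    using svd by (simp add: is_thin_svd_def)
  have split: "{..<?m} = {..<r} \<union> {r..<?m}" using r by auto
  have Ueq: "U i j = (\<Sum>k<r. (s k * V j k) * Z i k) + (\<Sum>k\<in>{r..<?m}. (s k * V j k) * Z i k)" if "i < n" for i
  proof -
    have "U i j = (\<Sum>k<?m. (s k * V j k) * Z i k)"
      using svd that j by (simp add: is_thin_svd_def algebra_simps)
    also have "\<dots> = (\<Sum>k<r. (s k * V j k) * Z i k) + (\<Sum>k\<in>{r..<?m}. (s k * V j k) * Z i k)"
      unfolding split by (rule sum.union_disjoint) auto
    finally show ?thesis .
  qed
  have Weq: "trunc_svd r Z s V i j = (\<Sum>k<r. (s k * V j k) * Z i k)" for i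
    by (simp add: trunc_svd_def algebra_simps)
  have "(\<Sum>i<n. (U i j)^2) = (\<Sum>i<n. (\<Sum>k<?m. (s k * V j k) * Z i k)^2)"
    using svd j by (intro sum.cong refl) (simp add: is_thin_svd_def algebra_simps)
  also have "\<dots> = (\<Sum>k<?m. (s k * V j k)^2)" by (rule orth_sum[OF orth]) auto
  finally have u2: "(\<Sum>i<n. (U i j)^2) = (\<Sum>k<?m. (s k * V j k)^2)" .
  have w2: "(\<Sum>i<n. (trunc_svd r Z s V i j)^2) = (\<Sum>k<r. (s k * V j k)^2)"
    unfolding Weq by (rule orth_sum[OF orth]) (use r in auto)
  show "(\<Sum>i<n. (trunc_svd r Z s V i j)^2) \<le> (\<Sum>i<n. (U i j)^2)"
    unfolding u2 w2 using r by (intro sum_mono2) auto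
  have "(\<Sum>i<n. (U i j - trunc_svd r Z s V i j)^2) = (\<Sum>i<n. (\<Sum>k\<in>{r..<?m}. (s k * V j k) * Z i k)^2)"
    using Ueq Weq by (intro sum.cong refl) simp
  also have "\<dots> = (\<Sum>k\<in>{r..<?m}. (s k * V j k)^2)" by (rule orth_sum[OF orth]) auto
  finally show "(\<Sum>i<n. (U i j - trunc_svd r Z s V i j)^2) = (\<Sum>k\<in>{r..<min n R}. (s k * V j k)^2)" .
qed

lemma svd_total:
  assumes svd: "is_thin_svd n R U Z s V" and r: "r \<le> min n R"
  shows "(\<Sum>j<R. (L2_set (\<lambda>i. U i j - trunc_svd r Z s V i j) {..<n})^2) = (\<Sum>k\<in>{r..<min n R}. (s k)^2)"
proof -
  have V: "\<forall>k<min n R. (\<Sum>j<R. V j k * V j k) = 1"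
    using svd by (simp add: is_thin_svd_def)
  have "(\<Sum>j<R. (L2_set (\<lambda>i. U i j - trunc_svd r Z s V i j) {..<n})^2)
      = (\<Sum>j<R. \<Sum>k\<in>{r..<min n R}. (s k * V j k)^2)"
    by (intro sum.cong refl) (simp add: L2_set_def sum_nonneg svd_facts(2)[OF svd r])
  also have "\<dots> = (\<Sum>k\<in>{r..<min n R}. (s k)^2 * (\<Sum>j<R. V j k * V j k))"
    by (simp add: sum.swap[of _ "{..<R}"] sum_distrib_left power_mult_distrib power2_eq_square algebra_simps)
  also have "\<dots> = (\<Sum>k\<in>{r..<min n R}. (s k)^2)"
    using V by (intro sum.cong refl) auto
  finally show ?thesis .
qed

lemma norm_sq_expand:
  "(L2_set (cp_tensor d R xi u) (multi_idx d n))^2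
   = (\<Sum>nu<R. \<Sum>mu<R. xi nu * xi mu * (\<Prod>l<d. \<Sum>i<n. u l nu i * u l mu i))"
proof -
  have "(L2_set (cp_tensor d R xi u) (multi_idx d n))^2 = (\<Sum>idx\<in>multi_idx d n. (cp_tensor d R xi u idx)^2)"
    by (simp add: L2_set_def sum_nonneg)
  also have "\<dots> = (\<Sum>idx\<in>multi_idx d n. \<Sum>nu<R. \<Sum>mu<R. xi nu * xi mu * (\<Prod>l<d. u l nu (idx l) * u l mu (idx l)))"
    by (simp add: cp_tensor_def power2_eq_square sum_product prod.distrib algebra_simps)
  also have "\<dots> = (\<Sum>nu<R. \<Sum>mu<R. xi nu * xi mu * (\<Sum>idx\<in>multi_idx d n. \<Prod>l<d. u l nu (idx l) * u l mu (idx l)))"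
    by (simp add: sum.swap[of _ "multi_idx d n"] sum_distrib_left)
  also have "\<dots> = (\<Sum>nu<R. \<Sum>mu<R. xi nu * xi mu * (\<Prod>l<d. \<Sum>i<n. u l nu i * u l mu i))"
    unfolding multi_idx_def by (subst prod_sum_PiE) auto
  finally show ?thesis .
qed

lemma xi_le_norm:
  assumes unit: "unit_skeleton d n R u"
    and off: "\<And>nu mu. nu < R \<Longrightarrow> mu < R \<Longrightarrow> nu \<noteq> mu \<Longrightarrow> 0 \<le> xi nu * xi mu * (\<Prod>l<d. \<Sum>i<n. u l nu i * u l mu i)"
  shows "L2_set xi {..<R} \<le> L2_set (cp_tensor d R xi u) (multi_idx d n)"
proof -
  have diag: "(\<Prod>l<d. \<Sum>i<n. u l nu i * u l nu i) = 1" if "nu < R" for nu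
  proof -
    have "(\<Sum>i<n. u l nu i * u l nu i) = 1" if "l < d" for l
      using unit \<open>nu < R\<close> that unfolding unit_skeleton_def
      by (metis (no_types, lifting) power2_eq_square real_sqrt_eq_1_iff sum.cong)
    then show ?thesis by simp
  qed
  have "(\<Sum>nu<R. (xi nu)^2) \<le> (\<Sum>nu<R. \<Sum>mu<R. xi nu * xi mu * (\<Prod>l<d. \<Sum>i<n. u l nu i * u l mu i))"
  proof (rule sum_mono)
    fix nu assume nu: "nu \<in> {..<R}"
    have "(xi nu)^2 = xi nu * xi nu * (\<Prod>l<d. \<Sum>i<n. u l nu i * u l nu i)"
      using diag nu by (simp add: power2_eq_square)
    also have "\<dots> \<le> (\<Sum>mu<R. xi nu * xi mu * (\<Prod>l<d. \<Sum>i<n. u l nu i * u l mu i))"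
      by (rule member_le_sum[where f = "\<lambda>mu. xi nu * xi mu * (\<Prod>l<d. \<Sum>i<n. u l nu i * u l mu i)"])
         (use nu off in auto)
    finally show "(xi nu)^2 \<le> (\<Sum>mu<R. xi nu * xi mu * (\<Prod>l<d. \<Sum>i<n. u l nu i * u l mu i))" .
  qed
  also have "\<dots> = (L2_set (cp_tensor d R xi u) (multi_idx d n))^2"
    by (simp add: norm_sq_expand)
  finally have "(L2_set xi {..<R})^2 \<le> (L2_set (cp_tensor d R xi u) (multi_idx d n))^2"
    by (simp add: L2_set_def sum_nonneg)
  then show ?thesis by (simp add: power2_le_iff_abs_le)
qed

lemma main_bound:
  assumes unit: "unit_skeleton d n R u"
    and svd: "\<forall>l<d. is_thin_svd n R (skel_mat u l) (Z l) (s l) (V l)"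
    and r: "\<forall>l<d. r l \<le> min n R"
  shows "tnorm d n (\<lambda>idx. cp_tensor d R xi u idx
                 - rhosvd d R xi (\<lambda>l. trunc_svd (r l) (Z l) (s l) (V l)) idx)
         \<le> L2_set xi {..<R} * svd_tail d n R r s"
proof -
  define W where "W l nu i = trunc_svd (r l) (Z l) (s l) (V l) i nu" for l nu i
  define e where "e k nu = L2_set (\<lambda>i. u k nu i - W k nu i) {..<n}" for k nu
  have U1: "L2_set (u l nu) {..<n} \<le> 1" if "l < d" "nu < R" for l nu
    using unit that by (simp add: unit_skeleton_def L2_set_def)
  have W1: "L2_set (W l nu) {..<n} \<le> 1" if "l < d" "nu < R" for l nu
  proof -
    have "(\<Sum>i<n. (W l nu i)^2) \<le> (\<Sum>i<n. (skel_mat u l i nu)^2)"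
      unfolding W_def using svd r that by (intro svd_facts(1)) auto
    also have "\<dots> = (\<Sum>i<n. (u l nu i)^2)" by (simp add: skel_mat_def)
    finally have "L2_set (W l nu) {..<n} \<le> L2_set (u l nu) {..<n}"
      unfolding L2_set_def by simp
    with U1[OF that] show ?thesis by simp
  qed
  have "tnorm d n (\<lambda>idx. cp_tensor d R xi u idx
                 - rhosvd d R xi (\<lambda>l. trunc_svd (r l) (Z l) (s l) (V l)) idx)
     = L2_set (\<lambda>idx. (\<Sum>nu<R. xi nu * (\<Prod>l<d. u l nu (idx l))) - (\<Sum>nu<R. xi nu * (\<Prod>l<d. W l nu (idx l)))) (multi_idx d n)"
    by (simp add: tnorm_L2 cp_tensor_def rhosvd_def W_def)
  also have "\<dots> \<le> (\<Sum>nu<R. \<bar>xi nu\<bar> * (\<Sum>k<d. e k nu))"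
    unfolding e_def by (rule error_bound) (use U1 W1 in auto)
  also have "\<dots> = (\<Sum>k<d. \<Sum>nu<R. \<bar>xi nu\<bar> * \<bar>e k nu\<bar>)"
    by (simp add: e_def sum_distrib_left sum.swap[of _ "{..<d}"])
  also have "\<dots> \<le> (\<Sum>k<d. L2_set xi {..<R} * L2_set (e k) {..<R})"
    by (intro sum_mono L2_set_mult_ineq)
  also have "\<dots> = L2_set xi {..<R} * svd_tail d n R r s"
  proof -
    have "L2_set (e k) {..<R} = sqrt (\<Sum>j\<in>{r k..<min n R}. (s k j)^2)" if "k < d" for k
    proof -
      have "(\<Sum>nu<R. (e k nu)^2) = (\<Sum>j\<in>{r k..<min n R}. (s k j)^2)"
        using svd_total[of n R "skel_mat u k" "Z k" "s k" "V k" "r k"] svd r that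
        by (simp add: e_def W_def skel_mat_def)
      then show ?thesis by (simp add: L2_set_def)
    qed
    then show ?thesis by (simp add: svd_tail_def sum_distrib_left)
  qed
  finally show ?thesis .
qed


theorem corollary2p4:
  fixes d n R :: nat and r :: "nat \<Rightarrow> nat"
  assumes "d \<ge> 2" and "n \<ge> 1" and "R \<ge> 1"
    and "\<forall>l<d. r l \<le> min n R"
  shows
   "(\<forall>(xi :: nat \<Rightarrow> real) (u :: nat \<Rightarrow> nat \<Rightarrow> nat \<Rightarrow> real)
       (Z :: nat \<Rightarrow> nat \<Rightarrow> nat \<Rightarrow> real) (s :: nat \<Rightarrow> nat \<Rightarrow> real) (V :: nat \<Rightarrow> nat \<Rightarrow> nat \<Rightarrow> real).
       unit_skeleton d n R u \<and>
       (\<forall>l<d. is_thin_svd n R (skel_mat u l) (Z l) (s l) (V l)) \<and>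
       (\<exists>l0<d. \<forall>nu<R. \<forall>mu<R. nu \<noteq> mu \<longrightarrow> (\<Sum>i<n. u l0 nu i * u l0 mu i) = 0)
       \<longrightarrow> tnorm d n (\<lambda>idx. cp_tensor d R xi u idx
                 - rhosvd d R xi (\<lambda>l. trunc_svd (r l) (Z l) (s l) (V l)) idx)
           \<le> 1 * tnorm d n (cp_tensor d R xi u) * svd_tail d n R r s)
    \<and>
    (\<exists>C::real. \<forall>(xi :: nat \<Rightarrow> real) (u :: nat \<Rightarrow> nat \<Rightarrow> nat \<Rightarrow> real)
       (Z :: nat \<Rightarrow> nat \<Rightarrow> nat \<Rightarrow> real) (s :: nat \<Rightarrow> nat \<Rightarrow> real) (V :: nat \<Rightarrow> nat \<Rightarrow> nat \<Rightarrow> real).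
       unit_skeleton d n R u \<and>
       (\<forall>l<d. is_thin_svd n R (skel_mat u l) (Z l) (s l) (V l)) \<and>
       (\<forall>nu<R. 0 \<le> xi nu) \<and> (\<forall>l<d. \<forall>nu<R. \<forall>i<n. 0 \<le> u l nu i)
       \<longrightarrow> tnorm d n (\<lambda>idx. cp_tensor d R xi u idx
                 - rhosvd d R xi (\<lambda>l. trunc_svd (r l) (Z l) (s l) (V l)) idx)
           \<le> C * tnorm d n (cp_tensor d R xi u) * svd_tail d n R r s)"
proof -
  have tail0: "0 \<le> svd_tail d n R r s" for s
    by (simp add: svd_tail_def sum_nonneg)
  have fin: "tnorm d n (\<lambda>idx. cp_tensor d R xi u idx
                 - rhosvd d R xi (\<lambda>l. trunc_svd (r l) (Z l) (s l) (V l)) idx)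
           \<le> 1 * tnorm d n (cp_tensor d R xi u) * svd_tail d n R r s"
    if unit: "unit_skeleton d n R u" and svd: "\<forall>l<d. is_thin_svd n R (skel_mat u l) (Z l) (s l) (V l)"
      and off: "\<And>nu mu. nu < R \<Longrightarrow> mu < R \<Longrightarrow> nu \<noteq> mu \<Longrightarrow> 0 \<le> xi nu * xi mu * (\<Prod>l<d. \<Sum>i<n. u l nu i * u l mu i)"
    for xi u Z s V
  proof -
    have "tnorm d n (\<lambda>idx. cp_tensor d R xi u idx
                 - rhosvd d R xi (\<lambda>l. trunc_svd (r l) (Z l) (s l) (V l)) idx)
         \<le> L2_set xi {..<R} * svd_tail d n R r s"
      by (rule main_bound[OF unit svd]) (use assms in auto)
    also have "\<dots> \<le> tnorm d n (cp_tensor d R xi u) * svd_tail d n R r s"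
      by (intro mult_right_mono tail0) (use xi_le_norm[OF unit off] in \<open>auto simp: tnorm_L2\<close>)
    finally show ?thesis by simp
  qed
  show ?thesis
  proof (intro conjI allI impI exI[of _ 1])
    fix xi :: "nat \<Rightarrow> real" and u :: "nat \<Rightarrow> nat \<Rightarrow> nat \<Rightarrow> real" and Z s V
    assume h: "unit_skeleton d n R u \<and>
       (\<forall>l<d. is_thin_svd n R (skel_mat u l) (Z l) (s l) (V l)) \<and>
       (\<exists>l0<d. \<forall>nu<R. \<forall>mu<R. nu \<noteq> mu \<longrightarrow> (\<Sum>i<n. u l0 nu i * u l0 mu i) = 0)"
    then obtain l0 where l0: "l0 < d" "\<forall>nu<R. \<forall>mu<R. nu \<noteq> mu \<longrightarrow> (\<Sum>i<n. u l0 nu i * u l0 mu i) = 0"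
      by blast
    have p0: "(\<Prod>l<d. \<Sum>i<n. u l nu i * u l mu i) = 0" if "nu < R" "mu < R" "nu \<noteq> mu" for nu mu
      using l0 that by (intro prod_zero) auto
    then show "tnorm d n (\<lambda>idx. cp_tensor d R xi u idx
                 - rhosvd d R xi (\<lambda>l. trunc_svd (r l) (Z l) (s l) (V l)) idx)
           \<le> 1 * tnorm d n (cp_tensor d R xi u) * svd_tail d n R r s"
      using h by (intro fin) (auto simp: p0)
  next
    fix xi :: "nat \<Rightarrow> real" and u :: "nat \<Rightarrow> nat \<Rightarrow> nat \<Rightarrow> real" and Z s V
    assume h: "unit_skeleton d n R u \<and>
       (\<forall>l<d. is_thin_svd n R (skel_mat u l) (Z l) (s l) (V l)) \<and>
       (\<forall>nu<R. 0 \<le> xi nu) \<and> (\<forall>l<d. \<forall>nu<R. \<forall>i<n. 0 \<le> u l nu i)"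
    have "0 \<le> xi nu * xi mu * (\<Prod>l<d. \<Sum>i<n. u l nu i * u l mu i)" if "nu < R" "mu < R" for nu mu
      using h that by (intro mult_nonneg_nonneg prod_nonneg sum_nonneg) auto
    then show "tnorm d n (\<lambda>idx. cp_tensor d R xi u idx
                 - rhosvd d R xi (\<lambda>l. trunc_svd (r l) (Z l) (s l) (V l)) idx)
           \<le> 1 * tnorm d n (cp_tensor d R xi u) * svd_tail d n R r s"
      using h by (intro fin) auto
  qed
qed

end
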